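(* Let $F$ be a Henselian discrete valuation field with ring of integers $\mathcal{O}_F$, uniformizer $t$, and infinite residue field $K$; write $x\mapsto\bar{x}$ for the residue map. Let $q\in\mathcal{O}_F[X]$ be a polynomial of degree $\ge1$ such that $q'$ has non-zero image in $K[X]$, and let $A\in\{1,2\}$. Then there exist finitely many $b_1,\dots,b_m\in\mathcal{O}_F$ such that whenever $b\in\mathcal{O}_F$ and the set $\{x\in\mathcal{O}_F:q(x)\in b+t^A\mathcal{O}_F,\ \bar{q}'(\bar{x})=0\}$ is non-empty, we have $b\equiv b_i\bmod t^A\mathcal{O}_F$ for some $i\in\{1,\dots,m\}$.
   Context: $\bar{q}$ denotes the image of $q$ in $K[X]$. *)

theory Defs
  imports "HOL-Computational_Algebra.Polynomial"
begin

text \<open>A (normalized) discrete valuation on a field, given by its values on nonzero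
  elements (the value at 0 is irrelevant, conventionally +infinity).\<close>
definition discrete_valuation :: "('a::field \<Rightarrow> int) \<Rightarrow> bool" where
  "discrete_valuation v \<longleftrightarrow>
     (\<forall>x y. x \<noteq> 0 \<longrightarrow> y \<noteq> 0 \<longrightarrow> v (x * y) = v x + v y) \<and>
     (\<forall>x y. x \<noteq> 0 \<longrightarrow> y \<noteq> 0 \<longrightarrow> x + y \<noteq> 0 \<longrightarrow> min (v x) (v y) \<le> v (x + y)) \<and>
     (\<exists>t. t \<noteq> 0 \<and> v t = 1)"

definition valring :: "('a::field \<Rightarrow> int) \<Rightarrow> 'a set" where
  "valring v = {x. x = 0 \<or> 0 \<le> v x}"

definition maxideal :: "('a::field \<Rightarrow> int) \<Rightarrow> 'a set" where
  "maxideal v = {x. x = 0 \<or> 0 < v x}"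

definition residue :: "('a::field \<Rightarrow> int) \<Rightarrow> 'a \<Rightarrow> 'a set" where
  "residue v x = {y \<in> valring v. y - x \<in> maxideal v}"

definition infinite_residue_field :: "('a::field \<Rightarrow> int) \<Rightarrow> bool" where
  "infinite_residue_field v \<longleftrightarrow> infinite (residue v ` valring v)"

definition henselian :: "('a::field \<Rightarrow> int) \<Rightarrow> bool" where
  "henselian v \<longleftrightarrow>
     (\<forall>p a. (\<forall>i. coeff p i \<in> valring v) \<longrightarrow> a \<in> valring v \<longrightarrow>
        poly p a \<in> maxideal v \<longrightarrow> poly (pderiv p) a \<notin> maxideal v \<longrightarrow>
        (\<exists>b \<in> valring v. poly p b = 0 \<and> b - a \<in> maxideal v))"

end

theory Submission
  imports Defs
begin

context
  fixes v :: "'a::field \<Rightarrow> int"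
  assumes dv: "discrete_valuation v"
begin

lemma vmult: "x \<noteq> 0 \<Longrightarrow> y \<noteq> 0 \<Longrightarrow> v (x * y) = v x + v y"
  using dv unfolding discrete_valuation_def by blast

lemma vadd: "x \<noteq> 0 \<Longrightarrow> y \<noteq> 0 \<Longrightarrow> x + y \<noteq> 0 \<Longrightarrow> min (v x) (v y) \<le> v (x + y)"
  using dv unfolding discrete_valuation_def by blast

lemma v1: "v 1 = 0"
  using vmult[of 1 1] by simp

lemma vm1: "v (-1) = 0"
  using vmult[of "-1" "-1"] v1 by simp

lemma vneg: "v (- x) = v x"
proof (cases "x = 0")
  case False
  then show ?thesis using vmult[of "-1" x] vm1 by simp
qed simp

lemma O_add: "x \<in> valring v \<Longrightarrow> y \<in> valring v \<Longrightarrow> x + y \<in> valring v"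
  unfolding valring_def
  by (cases "x = 0"; cases "y = 0"; cases "x + y = 0") (auto dest!: vadd[of x y])

lemma O_mult: "x \<in> valring v \<Longrightarrow> y \<in> valring v \<Longrightarrow> x * y \<in> valring v"
  unfolding valring_def
  by (cases "x = 0"; cases "y = 0") (auto simp: vmult)

lemma O_uminus: "x \<in> valring v \<Longrightarrow> - x \<in> valring v"
  unfolding valring_def by (auto simp: vneg)

lemma O_diff: "x \<in> valring v \<Longrightarrow> y \<in> valring v \<Longrightarrow> x - y \<in> valring v"
proof -
  assume "x \<in> valring v" "y \<in> valring v"
  then have "x + - y \<in> valring v" by (intro O_add O_uminus)
  then show ?thesis by (simp only: diff_conv_add_uminus)
qed

lemma O_0: "0 \<in> valring v" and O_1: "1 \<in> valring v"
  unfolding valring_def by (auto simp: v1)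

lemma O_of_nat: "of_nat n \<in> valring v"
  by (induction n) (auto intro: O_add O_0 O_1)

lemma M_O: "x \<in> maxideal v \<Longrightarrow> x \<in> valring v"
  unfolding valring_def maxideal_def by auto

lemma M_add: "x \<in> maxideal v \<Longrightarrow> y \<in> maxideal v \<Longrightarrow> x + y \<in> maxideal v"
  unfolding maxideal_def
  by (cases "x = 0"; cases "y = 0"; cases "x + y = 0") (auto dest!: vadd[of x y])

lemma M_mult: "x \<in> maxideal v \<Longrightarrow> y \<in> valring v \<Longrightarrow> x * y \<in> maxideal v"
  unfolding valring_def maxideal_def
  by (cases "x = 0"; cases "y = 0") (auto simp: vmult)

lemma M_mult2: "x \<in> valring v \<Longrightarrow> y \<in> maxideal v \<Longrightarrow> x * y \<in> maxideal v"
  using M_mult[of y x] by (simp add: mult.commute)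

lemma M_uminus: "x \<in> maxideal v \<Longrightarrow> - x \<in> maxideal v"
  unfolding maxideal_def by (auto simp: vneg)

lemma M_diff: "x \<in> maxideal v \<Longrightarrow> y \<in> maxideal v \<Longrightarrow> x - y \<in> maxideal v"
proof -
  assume "x \<in> maxideal v" "y \<in> maxideal v"
  then have "x + - y \<in> maxideal v" by (intro M_add M_uminus)
  then show ?thesis by (simp only: diff_conv_add_uminus)
qed

lemma M_0: "0 \<in> maxideal v"
  unfolding maxideal_def by auto

lemma M_prime: "x \<in> valring v \<Longrightarrow> y \<in> valring v \<Longrightarrow> x * y \<in> maxideal v
   \<Longrightarrow> x \<in> maxideal v \<or> y \<in> maxideal v"
  unfolding valring_def maxideal_def
  by (cases "x = 0"; cases "y = 0") (auto simp: vmult)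

lemma M_t: assumes "t \<noteq> 0" "v t = 1" "h \<in> maxideal v"
  shows "\<exists>u \<in> valring v. h = t * u"
proof (cases "h = 0")
  case True
  then show ?thesis using O_0 by auto
next
  case False
  have "v h = v (t * (h / t))" using assms(1) by simp
  also have "\<dots> = v t + v (h / t)" using assms False by (intro vmult) auto
  also have "\<dots> = 1 + v (h / t)" using assms by simp
  finally have "0 \<le> v (h / t)" using assms(3) False unfolding maxideal_def by auto
  then show ?thesis using assms(1) by (intro bexI[of _ "h / t"]) (auto simp: valring_def)
qed

definition intpoly :: "'a poly \<Rightarrow> bool" where
  "intpoly p \<longleftrightarrow> (\<forall>i. coeff p i \<in> valring v)"

lemma intpoly_pCons: "intpoly (pCons c p) \<longleftrightarrow> c \<in> valring v \<and> intpoly p"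
  unfolding intpoly_def
  by (metis coeff_pCons_0 coeff_pCons_Suc not0_implies_Suc)

lemma poly_O: "intpoly p \<Longrightarrow> a \<in> valring v \<Longrightarrow> poly p a \<in> valring v"
  by (induction p) (auto simp: intpoly_pCons intro: O_add O_mult O_0)

lemma intpoly_pderiv: "intpoly p \<Longrightarrow> intpoly (pderiv p)"
  unfolding intpoly_def coeff_pderiv by (metis O_mult O_of_nat)

lemma taylor1: "intpoly p \<Longrightarrow> a \<in> valring v \<Longrightarrow> h \<in> valring v \<Longrightarrow>
   \<exists>r \<in> valring v. poly p (a + h) = poly p a + h * r"
proof (induction p)
  case 0
  then show ?case using O_0 by auto
next
  case (pCons c p)
  then obtain r where r: "r \<in> valring v" "poly p (a + h) = poly p a + h * r"
    by (auto simp: intpoly_pCons)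
  have "poly (pCons c p) (a + h) = poly (pCons c p) a + h * (poly p a + (a + h) * r)"
    using r by (simp add: algebra_simps)
  moreover have "poly p a + (a + h) * r \<in> valring v"
    using pCons r by (auto simp: intpoly_pCons intro!: O_add O_mult poly_O)
  ultimately show ?case by blast
qed

lemma taylor2: "intpoly p \<Longrightarrow> a \<in> valring v \<Longrightarrow> h \<in> valring v \<Longrightarrow>
   \<exists>r \<in> valring v. poly p (a + h) = poly p a + h * poly (pderiv p) a + h^2 * r"
proof (induction p)
  case 0
  then show ?case using O_0 by auto
next
  case (pCons c p)
  then obtain r where r: "r \<in> valring v"
      "poly p (a + h) = poly p a + h * poly (pderiv p) a + h^2 * r"
    by (auto simp: intpoly_pCons)
  have "poly (pCons c p) (a + h) = poly (pCons c p) a + h * poly (pderiv (pCons c p)) a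
        + h^2 * (poly (pderiv p) a + (a + h) * r)"
    using r by (simp add: pderiv_pCons algebra_simps power2_eq_square)
  moreover have "poly (pderiv p) a + (a + h) * r \<in> valring v"
    using pCons r by (auto simp: intpoly_pCons intro!: O_add O_mult poly_O intpoly_pderiv)
  ultimately show ?case by blast
qed

lemma intpoly_synthetic_div: "intpoly p \<Longrightarrow> c \<in> valring v \<Longrightarrow> intpoly (synthetic_div p c)"
  by (induction p) (auto simp: intpoly_pCons intro: poly_O)

lemma roots_finite:
  "intpoly p \<Longrightarrow> (\<exists>i. coeff p i \<notin> maxideal v) \<Longrightarrow>
   \<exists>S. finite S \<and> S \<subseteq> valring v \<and>
     (\<forall>x \<in> valring v. poly p x \<in> maxideal v \<longrightarrow> (\<exists>s\<in>S. x - s \<in> maxideal v))"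
proof (induction "degree p" arbitrary: p rule: less_induct)
  case less
  show ?case
  proof (cases "\<exists>a \<in> valring v. poly p a \<in> maxideal v")
    case False
    then show ?thesis by (intro exI[of _ "{}"]) auto
  next
    case True
    then obtain a where a: "a \<in> valring v" "poly p a \<in> maxideal v" by blast
    define g where "g = synthetic_div p a"
    have gO: "intpoly g" using less a by (simp add: g_def intpoly_synthetic_div)
    have corr: "p + smult a g = pCons (poly p a) g"
      unfolding g_def by (rule synthetic_div_correct)
    have gM: "\<exists>i. coeff g i \<notin> maxideal v"
    proof (rule ccontr)
      assume "\<not> ?thesis"
      then have gm: "\<And>i. coeff g i \<in> maxideal v" by blast
      have "coeff p i \<in> maxideal v" for i
      proof (cases i)
        case 0
        have "coeff p 0 = poly p a - a * coeff g 0"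
          using arg_cong[OF corr, of "\<lambda>q. coeff q 0"] by (simp add: algebra_simps)
        then show ?thesis using 0 M_diff[OF a(2) M_mult2[OF a(1) gm]] by simp
      next
        case (Suc j)
        have "coeff p (Suc j) = coeff g j - a * coeff g (Suc j)"
          using arg_cong[OF corr, of "\<lambda>q. coeff q (Suc j)"] by (simp add: algebra_simps)
        then show ?thesis using Suc M_diff[OF gm M_mult2[OF a(1) gm]] by simp
      qed
      then show False using less(3) by blast
    qed
    have dp: "degree p \<noteq> 0"
    proof
      assume d0: "degree p = 0"
      define c where "c = coeff p 0"
      have pc: "p = [:c:]" unfolding c_def using d0 by (rule degree_0_id[symmetric])
      have "coeff p i \<in> maxideal v" for i
      proof (cases i)
        case 0
        have "poly p a = c" using pc by simp
        then show ?thesis using 0 a(2) c_def by simp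
      next
        case (Suc j)
        then show ?thesis using pc M_0 by simp
      qed
      then show False using less(3) by blast
    qed
    have "degree g < degree p" using dp by (simp add: g_def degree_synthetic_div)
    from less(1)[OF this gO gM] obtain S where S: "finite S" "S \<subseteq> valring v"
      "\<forall>x \<in> valring v. poly g x \<in> maxideal v \<longrightarrow> (\<exists>s\<in>S. x - s \<in> maxideal v)" by blast
    show ?thesis
    proof (intro exI[of _ "insert a S"] conjI ballI impI)
      fix x assume x: "x \<in> valring v" "poly p x \<in> maxideal v"
      have "poly p x + a * poly g x = poly p a + x * poly g x"
        using arg_cong[OF corr, of "\<lambda>q. poly q x"] by simp
      then have "(x - a) * poly g x = poly p x - poly p a" by (simp add: algebra_simps)
      then have "(x - a) * poly g x \<in> maxideal v" using M_diff[OF x(2) a(2)] by simp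
      then have "x - a \<in> maxideal v \<or> poly g x \<in> maxideal v"
        using M_prime[OF O_diff[OF x(1) a(1)] poly_O[OF gO x(1)]] by blast
      then show "\<exists>s\<in>insert a S. x - s \<in> maxideal v" using S x by auto
    qed (use S a in auto)
  qed
qed

end

lemma alg1: "(P::'b::comm_ring_1) + (t*u)*D + ((t*u)*(t*u))*r - t*y = P + t*(u*D + (t*u)*u*r - y)"
  by (simp add: algebra_simps)

lemma alg2: "(P::'b::comm_ring_1) + (t*u)*(t*w) + ((t*u)*(t*u))*r - (t*t)*y = P + (t*t)*(u*w + u*u*r - y)"
  by (simp add: algebra_simps)

theorem lemma4p7:
  fixes v :: "'a::field \<Rightarrow> int" and t :: 'a and q :: "'a poly" and A :: nat
  assumes "discrete_valuation v"
    and "henselian v"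
    and "infinite_residue_field v"
    and "t \<noteq> 0" and "v t = 1"
    and "\<forall>i. coeff q i \<in> valring v"
    and "degree q \<ge> 1"
    and "\<exists>i. coeff (pderiv q) i \<notin> maxideal v"
    and "A \<in> {1, 2}"
  shows "\<exists>B. finite B \<and> B \<subseteq> valring v \<and>
           (\<forall>b \<in> valring v.
              (\<exists>x \<in> valring v. (\<exists>y \<in> valring v. poly q x = b + t ^ A * y) \<and>
                                 poly (pderiv q) x \<in> maxideal v)
              \<longrightarrow> (\<exists>c \<in> B. \<exists>y \<in> valring v. b = c + t ^ A * y))"
proof -
  note dv = assms(1)
  have qO: "intpoly v q" using assms(6) dv by (simp add: intpoly_def)
  have q'O: "intpoly v (pderiv q)" using intpoly_pderiv[OF dv qO] .
  obtain S where S: "finite S" "S \<subseteq> valring v"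
    "\<forall>x \<in> valring v. poly (pderiv q) x \<in> maxideal v \<longrightarrow> (\<exists>s\<in>S. x - s \<in> maxideal v)"
    using roots_finite[OF dv q'O assms(8)] by blast
  have tO: "t \<in> valring v" using assms(5) by (simp add: valring_def)
  show ?thesis
  proof (intro exI[of _ "poly q ` S"] conjI ballI impI)
    show "poly q ` S \<subseteq> valring v" using S(2) poly_O[OF dv qO] by auto
  next
    fix b assume b: "b \<in> valring v"
      "\<exists>x \<in> valring v. (\<exists>y \<in> valring v. poly q x = b + t ^ A * y) \<and>
                                 poly (pderiv q) x \<in> maxideal v"
    then obtain x y where xy: "x \<in> valring v" "y \<in> valring v" "poly q x = b + t ^ A * y"
      "poly (pderiv q) x \<in> maxideal v" by blast
    obtain s where s: "s \<in> S" "x - s \<in> maxideal v" using S(3) xy by blast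
    define h where "h = x - s"
    have sO: "s \<in> valring v" using s S(2) by auto
    have hO: "h \<in> valring v" using s M_O[OF dv] h_def by auto
    have xe: "x = s + h" by (simp add: h_def)
    obtain u where u: "u \<in> valring v" "h = t * u" using M_t[OF dv assms(4,5)] s h_def by blast
    obtain r1 where r1: "r1 \<in> valring v" "poly (pderiv q) x = poly (pderiv q) s + h * r1"
      using taylor1[OF dv q'O sO hO] xe by auto
    have "poly (pderiv q) s = poly (pderiv q) x - h * r1" using r1 by simp
    moreover have "h * r1 \<in> maxideal v" using s r1 h_def M_mult[OF dv] by auto
    ultimately have ds: "poly (pderiv q) s \<in> maxideal v"
      using xy(4) M_diff[OF dv, of "poly (pderiv q) x" "h*r1"] by simp
    obtain w where w: "w \<in> valring v" "poly (pderiv q) s = t * w"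
      using M_t[OF dv assms(4,5) ds] by blast
    obtain r2 where r2: "r2 \<in> valring v"
      "poly q x = poly q s + h * poly (pderiv q) s + h^2 * r2"
      using taylor2[OF dv qO sO hO] xe by auto
    have qdO: "poly (pderiv q) s \<in> valring v" using poly_O[OF dv q'O sO] .
    show "\<exists>c \<in> poly q ` S. \<exists>y \<in> valring v. b = c + t ^ A * y"
    proof (cases "A = 1")
      case True
      have "b = poly q x - t ^ A * y" using xy(3) by (metis add_diff_cancel_right')
      also have "\<dots> = poly q s + h * poly (pderiv q) s + h^2 * r2 - t * y"
        unfolding r2(2) True power_one_right by (rule refl)
      also have "\<dots> = poly q s + t * (u * poly (pderiv q) s + h * u * r2 - y)"
        unfolding u(2) power2_eq_square by (rule alg1[of "poly q s" t u "poly (pderiv q) s" r2 y])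
      finally have "b = poly q s + t * (u * poly (pderiv q) s + h * u * r2 - y)" .
      moreover have "u * poly (pderiv q) s + h * u * r2 - y \<in> valring v"
        using u r2 hO xy qdO by (intro O_diff[OF dv] O_add[OF dv] O_mult[OF dv]) auto
      ultimately show ?thesis using True s by auto
    next
      case False
      then have A2: "A = 2" using assms(9) by auto
      have "b = poly q x - t ^ A * y" using xy(3) by (metis add_diff_cancel_right')
      also have "\<dots> = poly q s + h * poly (pderiv q) s + h^2 * r2 - t^2 * y"
        unfolding r2(2) A2 by (rule refl)
      also have "\<dots> = poly q s + t^2 * (u * w + u * u * r2 - y)"
        unfolding u(2) w(2) power2_eq_square by (rule alg2[of "poly q s" t u w r2 y])
      finally have "b = poly q s + t^2 * (u * w + u * u * r2 - y)" .
      moreover have "u * w + u * u * r2 - y \<in> valring v"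
        using u r2 w xy by (intro O_diff[OF dv] O_add[OF dv] O_mult[OF dv]) auto
      ultimately show ?thesis using A2 s by auto
    qed
  qed (use S in auto)
qed

end
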